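(* Let $P=\varprojlim\langle\{P_n\},\{p^n_k\}_{k<n}\rangle$ and $H=\varprojlim\langle\{H_n\},\{h^n_k\}_{k<n}\rangle$ be profinite posets and $f:P\to H$ a continuous quotient map. Then there exist a strictly increasing sequence $(i_n)_{n\in\mathbb{N}}$ of natural numbers and quotient maps $g_j:P_{i_j}\to H_j$ such that $f(x_1,x_2,\dots)=(g_1(x_{i_1}),g_2(x_{i_2}),\dots)$ for all $(x_n)\in P$, and $g_k\circ p^{i_n}_{i_k}=h^n_k\circ g_n$ for all $k<n$.
   Context: A quotient map between posets is a surjective order-preserving map $\phi:A\to B$ such that for all $p\le r$ in $B$ there are $x\le y$ in $A$ with $\phi(x)=p,\phi(y)=r$. A profinite poset is an inverse limit $\{(x_n)\in\prod_n P_n:p^{n+1}_n(x_{n+1})=x_n\ \forall n\}$ of nonempty finite posets $P_n$ with quotient maps $p^m_k:P_m\to P_k$ ($k<m$) satisfying $p^k_l\circ p^m_k=p^m_l$, ordered coordinatewise and topologized as a subspace of the product of discrete spaces. *)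

theory Defs
  imports "HOL-Analysis.Analysis"
begin

definition is_poset :: "'a set \<Rightarrow> ('a \<Rightarrow> 'a \<Rightarrow> bool) \<Rightarrow> bool" where
  "is_poset A le \<longleftrightarrow>
     (\<forall>x\<in>A. le x x) \<and>
     (\<forall>x\<in>A. \<forall>y\<in>A. le x y \<and> le y x \<longrightarrow> x = y) \<and>
     (\<forall>x\<in>A. \<forall>y\<in>A. \<forall>z\<in>A. le x y \<and> le y z \<longrightarrow> le x z)"

definition quotient_map_poset ::
  "'a set \<Rightarrow> ('a \<Rightarrow> 'a \<Rightarrow> bool) \<Rightarrow> 'b set \<Rightarrow> ('b \<Rightarrow> 'b \<Rightarrow> bool) \<Rightarrow> ('a \<Rightarrow> 'b) \<Rightarrow> bool" where
  "quotient_map_poset A leA B leB \<phi> \<longleftrightarrow>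
     \<phi> ` A = B \<and>
     (\<forall>x\<in>A. \<forall>y\<in>A. leA x y \<longrightarrow> leB (\<phi> x) (\<phi> y)) \<and>
     (\<forall>p\<in>B. \<forall>r\<in>B. leB p r \<longrightarrow> (\<exists>x\<in>A. \<exists>y\<in>A. leA x y \<and> \<phi> x = p \<and> \<phi> y = r))"

definition profinite_system ::
  "(nat \<Rightarrow> 'a set) \<Rightarrow> (nat \<Rightarrow> 'a \<Rightarrow> 'a \<Rightarrow> bool) \<Rightarrow> (nat \<Rightarrow> nat \<Rightarrow> 'a \<Rightarrow> 'a) \<Rightarrow> bool" where
  "profinite_system P le p \<longleftrightarrow>
     (\<forall>n. finite (P n) \<and> P n \<noteq> {} \<and> is_poset (P n) (le n)) \<and>
     (\<forall>k m. k < m \<longrightarrow> quotient_map_poset (P m) (le m) (P k) (le k) (p m k)) \<and>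
     (\<forall>l k m. l < k \<and> k < m \<longrightarrow> (\<forall>x\<in>P m. p k l (p m k x) = p m l x))"

definition invlim :: "(nat \<Rightarrow> 'a set) \<Rightarrow> (nat \<Rightarrow> nat \<Rightarrow> 'a \<Rightarrow> 'a) \<Rightarrow> (nat \<Rightarrow> 'a) set" where
  "invlim P p = {x. (\<forall>n. x n \<in> P n) \<and> (\<forall>n. p (Suc n) n (x (Suc n)) = x n)}"

definition invlim_le :: "(nat \<Rightarrow> 'a \<Rightarrow> 'a \<Rightarrow> bool) \<Rightarrow> (nat \<Rightarrow> 'a) \<Rightarrow> (nat \<Rightarrow> 'a) \<Rightarrow> bool" where
  "invlim_le le x y \<longleftrightarrow> (\<forall>n. le n (x n) (y n))"

definition invlim_top :: "(nat \<Rightarrow> 'a set) \<Rightarrow> (nat \<Rightarrow> nat \<Rightarrow> 'a \<Rightarrow> 'a) \<Rightarrow> (nat \<Rightarrow> 'a) topology" where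
  "invlim_top P p = subtopology (product_topology (\<lambda>n. discrete_topology (P n)) UNIV) (invlim P p)"

end

theory Submission
  imports Defs
begin


lemma thread_down:
  assumes S: "profinite_system P le p" and x: "x \<in> invlim P p"
  shows "k < m \<Longrightarrow> p m k (x m) = x k"
proof (induction m)
  case 0 then show ?case by simp
next
  case (Suc m)
  have xs: "p (Suc m) m (x (Suc m)) = x m" using x by (simp add: invlim_def)
  show ?case
  proof (cases "k = m")
    case True then show ?thesis using xs by simp
  next
    case False
    then have "k < m" using Suc.prems by simp
    moreover have "x (Suc m) \<in> P (Suc m)" using x by (simp add: invlim_def)
    ultimately have "p m k (p (Suc m) m (x (Suc m))) = p (Suc m) k (x (Suc m))"
      using S unfolding profinite_system_def by blast
    then show ?thesis using xs Suc.IH \<open>k < m\<close> by simp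
  qed
qed

lemma thread_eq_below:
  assumes S: "profinite_system P le p" and x: "x \<in> invlim P p" and y: "y \<in> invlim P p"
    and e: "x m = y m" and km: "k \<le> m"
  shows "x k = y k"
proof (cases "k = m")
  case True then show ?thesis using e by simp
next
  case False then have "k < m" using km by simp
  then show ?thesis using thread_down[OF S x] thread_down[OF S y] e by metis
qed

lemma lift_pair:
  assumes S: "profinite_system P le p" and a: "a \<in> P n" and b: "b \<in> P n" and ab: "le n a b"
  shows "\<exists>x\<in>invlim P p. \<exists>y\<in>invlim P p. invlim_le le x y \<and> x n = a \<and> y n = b"
proof -
  have step: "\<forall>c d. c \<in> P m \<and> d \<in> P m \<and> le m c d \<longrightarrow>
      (\<exists>c' d'. c' \<in> P (Suc m) \<and> d' \<in> P (Suc m) \<and> le (Suc m) c' d' \<and> p (Suc m) m c' = c \<and> p (Suc m) m d' = d)" for m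
  proof -
    have "quotient_map_poset (P (Suc m)) (le (Suc m)) (P m) (le m) (p (Suc m) m)"
      using S unfolding profinite_system_def by blast
    then show ?thesis unfolding quotient_map_poset_def by blast
  qed
  define nxt where "nxt m cd = (SOME (c', d'). c' \<in> P (Suc m) \<and> d' \<in> P (Suc m) \<and> le (Suc m) c' d' \<and> p (Suc m) m c' = fst cd \<and> p (Suc m) m d' = snd cd)" for m cd
  define q where "q = rec_nat (a, b) (\<lambda>t cd. nxt (n + t) cd)"
  have q0: "q 0 = (a, b)" by (simp add: q_def)
  have qS: "q (Suc t) = nxt (n + t) (q t)" for t by (simp add: q_def)
  have nxt_ok: "fst (nxt m cd) \<in> P (Suc m) \<and> snd (nxt m cd) \<in> P (Suc m) \<and> le (Suc m) (fst (nxt m cd)) (snd (nxt m cd))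
      \<and> p (Suc m) m (fst (nxt m cd)) = fst cd \<and> p (Suc m) m (snd (nxt m cd)) = snd cd"
    if "fst cd \<in> P m" "snd cd \<in> P m" "le m (fst cd) (snd cd)" for m cd
  proof -
    from step[of m] that obtain c' d' where "c' \<in> P (Suc m) \<and> d' \<in> P (Suc m) \<and> le (Suc m) c' d' \<and> p (Suc m) m c' = fst cd \<and> p (Suc m) m d' = snd cd"
      by blast
    then have "\<exists>z. (case z of (c', d') \<Rightarrow> c' \<in> P (Suc m) \<and> d' \<in> P (Suc m) \<and> le (Suc m) c' d' \<and> p (Suc m) m c' = fst cd \<and> p (Suc m) m d' = snd cd)"
      by (intro exI[of _ "(c', d')"]) simp
    then have "case nxt m cd of (c', d') \<Rightarrow> c' \<in> P (Suc m) \<and> d' \<in> P (Suc m) \<and> le (Suc m) c' d' \<and> p (Suc m) m c' = fst cd \<and> p (Suc m) m d' = snd cd"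
      unfolding nxt_def by (rule someI_ex)
    then show ?thesis by (simp split: prod.splits)
  qed
  have qok: "fst (q t) \<in> P (n + t) \<and> snd (q t) \<in> P (n + t) \<and> le (n + t) (fst (q t)) (snd (q t))" for t
  proof (induction t)
    case 0 then show ?case using a b ab q0 by simp
  next
    case (Suc t) then show ?case using nxt_ok[of "q t" "n + t"] qS[of t] by simp
  qed
  have qstep: "p (Suc (n + t)) (n + t) (fst (q (Suc t))) = fst (q t) \<and> p (Suc (n + t)) (n + t) (snd (q (Suc t))) = snd (q t)" for t
    using nxt_ok[of "q t" "n + t"] qS[of t] qok[of t] by simp
  define x where "x m = (if m < n then p n m a else fst (q (m - n)))" for m
  define y where "y m = (if m < n then p n m b else snd (q (m - n)))" for m
  have qm: "quotient_map_poset (P n) (le n) (P m) (le m) (p n m)" if "m < n" for m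
    using S that unfolding profinite_system_def by blast
  have comp: "p (Suc m) m (p n (Suc m) z) = p n m z" if "Suc m < n" "z \<in> P n" for m z
    using S that unfolding profinite_system_def by (metis lessI)
  have xin: "x \<in> invlim P p" and yin: "y \<in> invlim P p" and xy: "invlim_le le x y"
  proof -
    have memx: "x m \<in> P m" and memy: "y m \<in> P m" and lexy: "le m (x m) (y m)" for m
    proof -
      have "x m \<in> P m \<and> y m \<in> P m \<and> le m (x m) (y m)"
      proof (cases "m < n")
        case True
        then show ?thesis using qm[OF True] a b ab unfolding x_def y_def quotient_map_poset_def by auto
      next
        case False
        then show ?thesis using qok[of "m - n"] unfolding x_def y_def by simp
      qed
      then show "x m \<in> P m" "y m \<in> P m" "le m (x m) (y m)" by auto
    qed
    have bx: "p (Suc m) m (x (Suc m)) = x m \<and> p (Suc m) m (y (Suc m)) = y m" for m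
    proof (cases "Suc m < n")
      case True then show ?thesis using comp a b unfolding x_def y_def by simp
    next
      case F: False
      show ?thesis
      proof (cases "Suc m = n")
        case True then show ?thesis unfolding x_def y_def using q0 by auto
      next
        case False
        then have "Suc m - n = Suc (m - n)" "\<not> m < n" "n + (m - n) = m" using F by auto
        then have "x (Suc m) = fst (q (Suc (m - n)))" "y (Suc m) = snd (q (Suc (m - n)))"
          "x m = fst (q (m - n))" "y m = snd (q (m - n))" using F unfolding x_def y_def by auto
        then show ?thesis using qstep[of "m - n"] \<open>n + (m - n) = m\<close> by simp
      qed
    qed
    show "x \<in> invlim P p" "y \<in> invlim P p" using memx memy bx unfolding invlim_def by auto
    show "invlim_le le x y" using lexy unfolding invlim_le_def by auto
  qed
  moreover have "x n = a" "y n = b" unfolding x_def y_def using q0 by auto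
  ultimately show ?thesis by blast
qed



lemma invlim_sub: "invlim P p \<subseteq> topspace (product_topology (\<lambda>n. discrete_topology (P n)) UNIV)"
  by (auto simp: invlim_def)

lemma invlim_compact:
  assumes S: "profinite_system P le p"
  shows "compactin (product_topology (\<lambda>n. discrete_topology (P n)) UNIV) (invlim P p)"
proof -
  let ?X = "product_topology (\<lambda>n. discrete_topology (P n)) UNIV"
  have cs: "compact_space ?X"
    using S unfolding compact_space_product_topology profinite_system_def
    by (simp add: compact_space_discrete_topology)
  define C where "C n = {x \<in> topspace ?X. p (Suc n) n (x (Suc n)) = x n}" for n
  have cl: "closedin ?X (C n)" for n
  proof -
    have c1: "continuous_map ?X (discrete_topology (P n)) (\<lambda>x. x n)"
      using continuous_map_product_projection[of n UNIV "\<lambda>n. discrete_topology (P n)"] by simp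
    have c0: "continuous_map ?X (discrete_topology (P (Suc n))) (\<lambda>x. x (Suc n))"
      using continuous_map_product_projection[of "Suc n" UNIV "\<lambda>n. discrete_topology (P n)"] by simp
    have "quotient_map_poset (P (Suc n)) (le (Suc n)) (P n) (le n) (p (Suc n) n)"
      using S unfolding profinite_system_def by blast
    then have "p (Suc n) n \<in> P (Suc n) \<rightarrow> P n" unfolding quotient_map_poset_def by auto
    then have c2: "continuous_map (discrete_topology (P (Suc n))) (discrete_topology (P n)) (p (Suc n) n)"
      by simp
    have c3: "continuous_map ?X (discrete_topology (P n)) (\<lambda>x. p (Suc n) n (x (Suc n)))"
      using continuous_map_compose[OF c0 c2] by (simp add: o_def)
    show ?thesis unfolding C_def
      by (rule closedin_continuous_maps_eq[OF _ c3 c1]) simp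
  qed
  have eq: "invlim P p = (\<Inter>n\<in>UNIV. C n)"
    by (auto simp: invlim_def C_def)
  have "closedin ?X (invlim P p)" unfolding eq using cl by blast
  then show ?thesis using closedin_compact_space[OF cs] by blast
qed

lemma factor:
  assumes S: "profinite_system P le p"
    and F: "continuous_map (invlim_top P p) (discrete_topology B) F"
  shows "\<exists>N. \<forall>y\<in>invlim P p. \<forall>z\<in>invlim P p. y N = z N \<longrightarrow> F y = F z"
proof -
  let ?X = "product_topology (\<lambda>n. discrete_topology (P n)) UNIV"
  define U where "U N = {x \<in> topspace ?X. \<forall>y\<in>invlim P p. \<forall>z\<in>invlim P p.
      (\<forall>m\<le>N. y m = x m) \<and> (\<forall>m\<le>N. z m = x m) \<longrightarrow> F y = F z}" for N
  have topI: "topspace (invlim_top P p) = invlim P p"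
    unfolding invlim_top_def using invlim_sub[of P p] by auto
  have op: "openin ?X (U N)" for N
  proof (subst openin_product_topology_alt, intro ballI)
    fix x assume x: "x \<in> U N"
    define V where "V i = (if i \<le> N then {x i} else P i)" for i
    have xt: "x \<in> topspace ?X" using x by (simp add: U_def)
    have "{i \<in> UNIV. V i \<noteq> topspace (discrete_topology (P i))} \<subseteq> {..N}"
    proof
      fix i assume i: "i \<in> {i \<in> UNIV. V i \<noteq> topspace (discrete_topology (P i))}"
      show "i \<in> {..N}"
      proof (rule ccontr)
        assume "i \<notin> {..N}"
        then have "V i = P i" by (simp add: V_def)
        then show False using i by simp
      qed
    qed
    then have "finite {i \<in> UNIV. V i \<noteq> topspace (discrete_topology (P i))}"
      using finite_subset finite_atMost by blast
    moreover have "\<forall>i\<in>UNIV. openin (discrete_topology (P i)) (V i)" using xt by (auto simp: V_def)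
    moreover have "x \<in> Pi\<^sub>E UNIV V" using xt by (auto simp: V_def)
    moreover have "Pi\<^sub>E UNIV V \<subseteq> U N"
    proof
      fix w assume w: "w \<in> Pi\<^sub>E UNIV V"
      have wt: "w \<in> topspace ?X" using w xt by (simp add: V_def PiE_iff split: if_splits) metis
      have we: "\<forall>m\<le>N. w m = x m"
      proof (intro allI impI)
        fix m assume "m \<le> N"
        moreover have "w m \<in> V m" using w by (simp add: PiE_iff)
        ultimately show "w m = x m" by (simp add: V_def)
      qed
      have Hx: "\<forall>y\<in>invlim P p. \<forall>z\<in>invlim P p.
        (\<forall>m\<le>N. y m = x m) \<and> (\<forall>m\<le>N. z m = x m) \<longrightarrow> F y = F z"
        using x unfolding U_def mem_Collect_eq by (rule conjunct2)
      have "\<forall>y\<in>invlim P p. \<forall>z\<in>invlim P p.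
        (\<forall>m\<le>N. y m = w m) \<and> (\<forall>m\<le>N. z m = w m) \<longrightarrow> F y = F z"
      proof (intro ballI impI)
        fix y z assume y: "y \<in> invlim P p" and z: "z \<in> invlim P p"
          and yz: "(\<forall>m\<le>N. y m = w m) \<and> (\<forall>m\<le>N. z m = w m)"
        then have "(\<forall>m\<le>N. y m = x m) \<and> (\<forall>m\<le>N. z m = x m)" using we by simp
        then show "F y = F z" using Hx y z by blast
      qed
      then show "w \<in> U N" using wt unfolding U_def mem_Collect_eq by (intro conjI)
    qed
    ultimately show "\<exists>V. finite {i \<in> UNIV. V i \<noteq> topspace (discrete_topology (P i))} \<and>
         (\<forall>i\<in>UNIV. openin (discrete_topology (P i)) (V i)) \<and> x \<in> Pi\<^sub>E UNIV V \<and> Pi\<^sub>E UNIV V \<subseteq> U N"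
      by (intro exI[of _ V] conjI)
  qed
  have cov: "invlim P p \<subseteq> \<Union>(range U)"
  proof
    fix x assume x: "x \<in> invlim P p"
    have Fx: "F x \<in> B" using continuous_map_image_subset_topspace[OF F] x topI by auto
    have "openin (invlim_top P p) {y \<in> topspace (invlim_top P p). F y \<in> {F x}}"
      using F Fx by (intro openin_continuous_map_preimage) auto
    then have "openin (subtopology ?X (invlim P p)) {y \<in> invlim P p. F y = F x}"
      unfolding topI by (simp add: invlim_top_def)
    then obtain T where T: "openin ?X T" and Teq: "{y \<in> invlim P p. F y = F x} = T \<inter> invlim P p"
      unfolding openin_subtopology by blast
    have xT: "x \<in> T" using Teq x by auto
    obtain V where Vf: "finite {i \<in> UNIV. V i \<noteq> topspace (discrete_topology (P i))}"
      and xV: "x \<in> Pi\<^sub>E UNIV V" and VT: "Pi\<^sub>E UNIV V \<subseteq> T"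
      using iffD1[OF openin_product_topology_alt T] xT by blast
    obtain N where N: "\<forall>i\<in>{i. V i \<noteq> P i}. i \<le> N"
      using Vf finite_nat_set_iff_bounded_le by auto
    have close: "F y = F x" if y: "y \<in> invlim P p" and ye: "\<forall>m\<le>N. y m = x m" for y
    proof -
      have "y \<in> Pi\<^sub>E UNIV V"
      proof -
        have "y i \<in> V i" for i
        proof (cases "V i = P i")
          case True then show ?thesis using y by (simp add: invlim_def)
        next
          case False then have "i \<le> N" using N by auto
          then show ?thesis using ye xV by auto
        qed
        then show ?thesis by auto
      qed
      then have "y \<in> T" using VT by auto
      then show ?thesis using Teq y by auto
    qed
    have "\<forall>y\<in>invlim P p. \<forall>z\<in>invlim P p.
      (\<forall>m\<le>N. y m = x m) \<and> (\<forall>m\<le>N. z m = x m) \<longrightarrow> F y = F z"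
    proof (intro ballI impI)
      fix y z assume y: "y \<in> invlim P p" and z: "z \<in> invlim P p"
        and yz: "(\<forall>m\<le>N. y m = x m) \<and> (\<forall>m\<le>N. z m = x m)"
      have "F y = F x" using close[OF y] yz by blast
      moreover have "F z = F x" using close[OF z] yz by blast
      ultimately show "F y = F z" by simp
    qed
    moreover have "x \<in> topspace ?X" using x invlim_sub[of P p] by blast
    ultimately have "x \<in> U N" unfolding U_def mem_Collect_eq by (intro conjI)
    then show "x \<in> \<Union>(range U)" by auto
  qed
  obtain \<F> where \<F>: "finite \<F>" "\<F> \<subseteq> range U" "invlim P p \<subseteq> \<Union>\<F>"
  proof -
    have H: "\<forall>\<U>. (\<forall>U \<in> \<U>. openin ?X U) \<and> invlim P p \<subseteq> \<Union>\<U>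
          \<longrightarrow> (\<exists>\<F>. finite \<F> \<and> \<F> \<subseteq> \<U> \<and> invlim P p \<subseteq> \<Union>\<F>)"
      using invlim_compact[OF S] unfolding compactin_def by blast
    have "\<forall>V \<in> range U. openin ?X V" using op by blast
    then show ?thesis using H[rule_format, of "range U"] cov that by blast
  qed
  obtain K where K: "finite K" "\<F> = U ` K"
    using finite_subset_image[OF \<F>(1) \<F>(2)] by blast
  obtain M where M: "\<forall>k\<in>K. k \<le> M"
    using K(1) finite_nat_set_iff_bounded_le by auto
  have mono: "U k \<subseteq> U M" if "k \<le> M" for k
  proof
    fix x assume "x \<in> U k"
    then have xt: "x \<in> topspace ?X" unfolding U_def by blast
    from \<open>x \<in> U k\<close> have H: "\<forall>y\<in>invlim P p. \<forall>z\<in>invlim P p.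
      (\<forall>m\<le>k. y m = x m) \<and> (\<forall>m\<le>k. z m = x m) \<longrightarrow> F y = F z"
      unfolding U_def mem_Collect_eq by (rule conjunct2)
    have "\<forall>y\<in>invlim P p. \<forall>z\<in>invlim P p.
      (\<forall>m\<le>M. y m = x m) \<and> (\<forall>m\<le>M. z m = x m) \<longrightarrow> F y = F z"
    proof (intro ballI impI)
      fix y z assume y: "y \<in> invlim P p" and z: "z \<in> invlim P p"
        and yz: "(\<forall>m\<le>M. y m = x m) \<and> (\<forall>m\<le>M. z m = x m)"
      have "(\<forall>m\<le>k. y m = x m) \<and> (\<forall>m\<le>k. z m = x m)"
        using yz that by simp
      then show "F y = F z" using H y z by blast
    qed
    then show "x \<in> U M" using xt unfolding U_def mem_Collect_eq by (intro conjI)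
  qed
  have allM: "invlim P p \<subseteq> U M"
  proof
    fix x assume "x \<in> invlim P p"
    then obtain W where "W \<in> \<F>" "x \<in> W" using \<F>(3) by blast
    then obtain k where "k \<in> K" "W = U k" using K(2) by blast
    then show "x \<in> U M" using mono[of k] M \<open>x \<in> W\<close> by blast
  qed
  show ?thesis
  proof (intro exI ballI impI)
    fix y z assume y: "y \<in> invlim P p" and z: "z \<in> invlim P p" and e: "y M = z M"
    have zy: "\<forall>m\<le>M. z m = y m"
    proof (intro allI impI)
      fix m assume "m \<le> M" then show "z m = y m" using thread_eq_below[OF S z y, of M m] e by simp
    qed
    have yM: "y \<in> U M" using allM y by blast
    then have "\<forall>y'\<in>invlim P p. \<forall>z'\<in>invlim P p.
      (\<forall>m\<le>M. y' m = y m) \<and> (\<forall>m\<le>M. z' m = y m) \<longrightarrow> F y' = F z'"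
      unfolding U_def mem_Collect_eq by (rule conjunct2)
    then show "F y = F z" using y z zy by blast
  qed
qed



lemma lift_one:
  assumes S: "profinite_system P le p" and a: "a \<in> P n"
  shows "\<exists>x\<in>invlim P p. x n = a"
proof -
  have "is_poset (P n) (le n)" using S unfolding profinite_system_def by simp
  then have "le n a a" using a unfolding is_poset_def by simp
  then obtain x y where "x \<in> invlim P p" "x n = a" using lift_pair[OF S a a] by blast
  then show ?thesis by blast
qed

theorem mainTheorem7:
  fixes P :: "nat \<Rightarrow> 'a set" and leP :: "nat \<Rightarrow> 'a \<Rightarrow> 'a \<Rightarrow> bool" and p :: "nat \<Rightarrow> nat \<Rightarrow> 'a \<Rightarrow> 'a"
    and H :: "nat \<Rightarrow> 'b set" and leH :: "nat \<Rightarrow> 'b \<Rightarrow> 'b \<Rightarrow> bool" and h :: "nat \<Rightarrow> nat \<Rightarrow> 'b \<Rightarrow> 'b"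
    and f :: "(nat \<Rightarrow> 'a) \<Rightarrow> (nat \<Rightarrow> 'b)"
  assumes "profinite_system P leP p"
    and "profinite_system H leH h"
    and "quotient_map_poset (invlim P p) (invlim_le leP) (invlim H h) (invlim_le leH) f"
    and "continuous_map (invlim_top P p) (invlim_top H h) f"
  shows "\<exists>i :: nat \<Rightarrow> nat. \<exists>g :: nat \<Rightarrow> 'a \<Rightarrow> 'b.
           strict_mono i \<and>
           (\<forall>j. quotient_map_poset (P (i j)) (leP (i j)) (H j) (leH j) (g j)) \<and>
           (\<forall>x\<in>invlim P p. f x = (\<lambda>j. g j (x (i j)))) \<and>
           (\<forall>k n. k < n \<longrightarrow> (\<forall>x\<in>P (i n). g k (p (i n) (i k) x) = h n k (g n x)))"
proof -
  note SP = assms(1) and SH = assms(2)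
  have Q: "f ` invlim P p = invlim H h \<and>
     (\<forall>x\<in>invlim P p. \<forall>y\<in>invlim P p. invlim_le leP x y \<longrightarrow> invlim_le leH (f x) (f y)) \<and>
     (\<forall>u\<in>invlim H h. \<forall>r\<in>invlim H h. invlim_le leH u r \<longrightarrow> (\<exists>x\<in>invlim P p. \<exists>y\<in>invlim P p. invlim_le leP x y \<and> f x = u \<and> f y = r))"
    using assms(3) unfolding quotient_map_poset_def .
  have fim: "f ` invlim P p = invlim H h" using Q by (rule conjunct1)
  have fmono: "\<And>x y. x \<in> invlim P p \<Longrightarrow> y \<in> invlim P p \<Longrightarrow> invlim_le leP x y \<Longrightarrow> invlim_le leH (f x) (f y)"
    using Q by blast
  have flift: "\<And>u v. u \<in> invlim H h \<Longrightarrow> v \<in> invlim H h \<Longrightarrow> invlim_le leH u v \<Longrightarrow>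
        \<exists>x\<in>invlim P p. \<exists>y\<in>invlim P p. invlim_le leP x y \<and> f x = u \<and> f y = v"
    using Q by blast
  have cont: "continuous_map (invlim_top P p) (discrete_topology (H j)) (\<lambda>x. f x j)" for j
  proof -
    have "continuous_map (invlim_top H h) (discrete_topology (H j)) (\<lambda>u. u j)"
      unfolding invlim_top_def
      by (rule continuous_map_from_subtopology)
         (rule continuous_map_product_projection[of j UNIV "\<lambda>n. discrete_topology (H n)", simplified])
    from continuous_map_compose[OF assms(4) this] show ?thesis by (simp add: o_def)
  qed
  have "\<forall>j. \<exists>N. \<forall>y\<in>invlim P p. \<forall>z\<in>invlim P p. y N = z N \<longrightarrow> f y j = f z j"
    using factor[OF SP cont] by (rule allI)
  then have "\<exists>N. \<forall>j. \<forall>y\<in>invlim P p. \<forall>z\<in>invlim P p. y (N j) = z (N j) \<longrightarrow> f y j = f z j"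
    by (rule choice)
  then obtain N where N0: "\<forall>j. \<forall>y\<in>invlim P p. \<forall>z\<in>invlim P p. y (N j) = z (N j) \<longrightarrow> f y j = f z j" ..
  have N: "\<forall>y\<in>invlim P p. \<forall>z\<in>invlim P p. y (N j) = z (N j) \<longrightarrow> f y j = f z j" for j
    using N0 by (rule spec)
  define i where "i j = j + (\<Sum>k\<le>j. N k)" for j
  have smi: "strict_mono i"
    unfolding strict_mono_Suc_iff i_def by simp
  have Ni: "N j \<le> i j" for j
  proof -
    have "N j \<le> (\<Sum>k\<le>j. N k)" by (rule member_le_sum) auto
    then show ?thesis unfolding i_def by simp
  qed
  have Fi: "f y j = f z j" if y: "y \<in> invlim P p" and z: "z \<in> invlim P p" and e: "y (i j) = z (i j)" for y z j
  proof -
    have "y (N j) = z (N j)" using thread_eq_below[OF SP y z e Ni] .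
    then show ?thesis using N[of j, rule_format, OF y z] by simp
  qed
  define g where "g j a = f (SOME x. x \<in> invlim P p \<and> x (i j) = a) j" for j a
  have gx: "g j (x (i j)) = f x j" if x: "x \<in> invlim P p" for x j
  proof -
    define x' where "x' = (SOME x'. x' \<in> invlim P p \<and> x' (i j) = x (i j))"
    have "x' \<in> invlim P p \<and> x' (i j) = x (i j)"
      unfolding x'_def
      using someI[of "\<lambda>x'. x' \<in> invlim P p \<and> x' (i j) = x (i j)" x] x by simp
    then have "f x' j = f x j" using Fi[of x' x j] x by simp
    then show ?thesis unfolding g_def x'_def[symmetric] .
  qed
  have fH: "f x \<in> invlim H h" if "x \<in> invlim P p" for x
  proof -
    have "f x \<in> f ` invlim P p" using that by (rule imageI)
    then show ?thesis unfolding fim .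
  qed
  have qm: "quotient_map_poset (P (i j)) (leP (i j)) (H j) (leH j) (g j)" for j
    unfolding quotient_map_poset_def
  proof (intro conjI ballI impI)
    show "g j ` P (i j) = H j"
    proof
      show "g j ` P (i j) \<subseteq> H j"
      proof
        fix b assume "b \<in> g j ` P (i j)"
        then obtain a where a: "a \<in> P (i j)" and b: "b = g j a" by blast
        obtain x where x: "x \<in> invlim P p" "x (i j) = a" using lift_one[OF SP a] by blast
        have "b = f x j" using gx[OF x(1), of j] x(2) b by simp
        then show "b \<in> H j" using fH[OF x(1)] by (simp add: invlim_def)
      qed
      show "H j \<subseteq> g j ` P (i j)"
      proof
        fix b assume b: "b \<in> H j"
        obtain u where u: "u \<in> invlim H h" "u j = b" using lift_one[OF SH b] by blast
        have "u \<in> f ` invlim P p" unfolding fim by (rule u(1))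
        then obtain x where x: "x \<in> invlim P p" "f x = u" by (auto elim: imageE)
        have "b = g j (x (i j))" using gx[OF x(1), of j] x(2) u(2) by simp
        moreover have "x (i j) \<in> P (i j)" using x(1) by (simp add: invlim_def)
        ultimately show "b \<in> g j ` P (i j)" by blast
      qed
    qed
  next
    fix a b assume a: "a \<in> P (i j)" and b: "b \<in> P (i j)" and ab: "leP (i j) a b"
    obtain x y where x: "x \<in> invlim P p" and y: "y \<in> invlim P p" and xy: "invlim_le leP x y"
      and xa: "x (i j) = a" and yb: "y (i j) = b"
      using lift_pair[OF SP a b ab] by blast
    have "leH j (f x j) (f y j)" using fmono[OF x y xy] unfolding invlim_le_def by blast
    then show "leH j (g j a) (g j b)" using gx[OF x, of j] gx[OF y, of j] xa yb by simp
  next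
    fix c d assume c: "c \<in> H j" and d: "d \<in> H j" and cd: "leH j c d"
    obtain u v where u: "u \<in> invlim H h" and v: "v \<in> invlim H h" and uv: "invlim_le leH u v"
      and uc: "u j = c" and vd: "v j = d"
      using lift_pair[OF SH c d cd] by blast
    obtain x y where x: "x \<in> invlim P p" and y: "y \<in> invlim P p" and xy: "invlim_le leP x y"
      and fx: "f x = u" and fy: "f y = v"
      using flift[OF u v uv] by blast
    have "leP (i j) (x (i j)) (y (i j))" using xy unfolding invlim_le_def by blast
    moreover have "x (i j) \<in> P (i j)" "y (i j) \<in> P (i j)" using x y by (simp_all add: invlim_def)
    moreover have "g j (x (i j)) = c" "g j (y (i j)) = d" using gx[OF x, of j] gx[OF y, of j] fx fy uc vd by simp_all
    ultimately show "\<exists>x\<in>P (i j). \<exists>y\<in>P (i j). leP (i j) x y \<and> g j x = c \<and> g j y = d" by blast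
  qed
  have fe: "\<forall>x\<in>invlim P p. f x = (\<lambda>j. g j (x (i j)))"
  proof
    fix x assume x: "x \<in> invlim P p"
    show "f x = (\<lambda>j. g j (x (i j)))"
    proof
      fix j show "f x j = g j (x (i j))" using gx[OF x, of j] by (rule sym)
    qed
  qed
  have comm: "\<forall>k n. k < n \<longrightarrow> (\<forall>x\<in>P (i n). g k (p (i n) (i k) x) = h n k (g n x))"
  proof (intro allI impI ballI)
    fix k n a assume kn: "k < n" and a: "a \<in> P (i n)"
    obtain t where t: "t \<in> invlim P p" "t (i n) = a" using lift_one[OF SP a] by blast
    have ik: "i k < i n" using smi kn by (simp add: strict_mono_less)
    have "p (i n) (i k) a = t (i k)" using thread_down[OF SP t(1) ik] t(2) by simp
    then have "g k (p (i n) (i k) a) = f t k" using gx[OF t(1), of k] by simp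
    also have "\<dots> = h n k (f t n)" using thread_down[OF SH fH[OF t(1)] kn] by simp
    also have "f t n = g n a" using gx[OF t(1), of n] t(2) by simp
    finally show "g k (p (i n) (i k) a) = h n k (g n a)" .
  qed
  show ?thesis using smi qm fe comm by blast
qed

end
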